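(* For each $n\ge1$ there is a bijection $\psi$ from the set of plane trees with $n$ edges to $\mathfrak S_n(132)$ such that, for every such tree $T$ and $\pi=\psi(T)$: (1) the number of young leaves of $T$ equals the number of double descents of the permutation $(n+1)\pi=(n+1,\pi_1,\dots,\pi_n)$; (2) the number of old leaves of $T$ equals the number of ascending runs of the permutation $\pi(n+1)=(\pi_1,\dots,\pi_n,n+1)$.
   Context: A plane tree is a rooted tree in which the children of each vertex are linearly ordered. A leaf is a vertex with no children; the one-vertex tree has no leaves. A leaf is old if it is the leftmost child of its parent, young otherwise. $\mathfrak S_n(132)$ is the set of permutations of $\{1,\dots,n\}$ with no indices $a<b<c$ such that $\pi_a<\pi_c<\pi_b$. For a sequence $\sigma$, a double descent is an index $i$ with $\sigma_i>\sigma_{i+1}>\sigma_{i+2}$, a double ascent is an index $i$ with $\sigma_i<\sigma_{i+1}<\sigma_{i+2}$, and an ascending run is a maximal increasing sequence $\sigma_i<\sigma_{i+1}<\cdots<\sigma_{i+k}$ of consecutive entries with $k\ge1$. *)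

theory Defs
  imports Main
begin

datatype ptree = Node "ptree list"

fun children :: "ptree \<Rightarrow> ptree list" where
  "children (Node ts) = ts"

fun edges :: "ptree \<Rightarrow> nat" where
  "edges (Node ts) = length ts + sum_list (map edges ts)"

text \<open>Old leaves: leaves that are the leftmost child of their parent.
  (The root is never a leaf, since leaves are children.)\<close>
fun old_leaves :: "ptree \<Rightarrow> nat" where
  "old_leaves (Node ts) =
     (case ts of [] \<Rightarrow> 0 | t # _ \<Rightarrow> (if children t = [] then 1 else 0))
     + sum_list (map old_leaves ts)"

fun young_leaves :: "ptree \<Rightarrow> nat" where
  "young_leaves (Node ts) =
     length (filter (\<lambda>t. children t = []) (drop 1 ts))
     + sum_list (map young_leaves ts)"

definition is_perm :: "nat \<Rightarrow> nat list \<Rightarrow> bool" where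
  "is_perm n xs \<longleftrightarrow> length xs = n \<and> distinct xs \<and> set xs = {1..n}"

definition avoids132 :: "nat list \<Rightarrow> bool" where
  "avoids132 xs \<longleftrightarrow> \<not> (\<exists>a b c. a < b \<and> b < c \<and> c < length xs \<and>
                          xs ! a < xs ! c \<and> xs ! c < xs ! b)"

definition S132 :: "nat \<Rightarrow> nat list set" where
  "S132 n = {xs. is_perm n xs \<and> avoids132 xs}"

definition double_descents :: "nat list \<Rightarrow> nat" where
  "double_descents s = card {i. i + 2 < length s \<and> s ! i > s ! (i+1) \<and> s ! (i+1) > s ! (i+2)}"

definition asc_runs :: "nat list \<Rightarrow> nat" where
  "asc_runs s = card {(i, j). i < j \<and> j < length s \<and>
       (\<forall>k. i \<le> k \<and> k < j \<longrightarrow> s ! k < s ! (k+1)) \<and>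
       (i = 0 \<or> \<not> s ! (i - 1) < s ! i) \<and>
       (j + 1 = length s \<or> \<not> s ! j < s ! (j+1))}"

end

theory Submission
  imports Defs
begin

fun dd :: "nat list \<Rightarrow> nat" where
  "dd (x # y # w) = (if w \<noteq> [] \<and> y < x \<and> hd w < y then 1 else 0) + dd (y # w)"
| "dd _ = 0"

fun ar :: "nat list \<Rightarrow> nat" where
  "ar (x # y # w) = (if x < y \<and> (w = [] \<or> \<not> y < hd w) then 1 else 0) + ar (y # w)"
| "ar _ = 0"

lemma card_Suc_split:
  assumes "finite {i. P i}"
  shows "card {i. P i} = (if P 0 then 1 else 0) + card {i. P (Suc i)}"
proof -
  have eq: "{i. P i} = (if P 0 then {0} else {}) \<union> Suc ` {i. P (Suc i)}"
    by (auto simp: image_iff) (metis not0_implies_Suc)+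
  have fin: "finite (Suc ` {i. P (Suc i)})"
    by (rule finite_subset[OF _ assms]) auto
  have "card {i. P i} = card ((if P 0 then {0} else {}) \<union> Suc ` {i. P (Suc i)})"
    by (rule arg_cong[where f=card, OF eq])
  also have "\<dots> = card (if P 0 then {0} else {}) + card (Suc ` {i. P (Suc i)})"
    by (subst card_Un_disjoint) (use fin in auto)
  also have "card (Suc ` {i. P (Suc i)}) = card {i. P (Suc i)}"
    by (rule card_image) auto
  finally show ?thesis by (cases "P 0") simp_all
qed

lemma dd_eq: "double_descents s = dd s"
proof (induction s rule: dd.induct)
  case (1 x y w)
  have fin: "finite {i. i + 2 < length (x # y # w) \<and> (x # y # w) ! i > (x # y # w) ! (i+1) \<and> (x # y # w) ! (i+1) > (x # y # w) ! (i+2)}"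
    by (rule finite_subset[of _ "{..<length (x#y#w)}"]) auto
  show ?case
    unfolding double_descents_def
    apply (subst card_Suc_split[OF fin])
    using 1 by (cases w) (auto simp: double_descents_def)
qed (auto simp: double_descents_def)

definition Pk :: "nat list \<Rightarrow> nat set" where
  "Pk s = {i. i + 1 < length s \<and> s ! i < s ! (i+1) \<and> (i + 2 = length s \<or> \<not> s ! (i+1) < s ! (i+2))}"

lemma ar_eq: "ar s = card (Pk s)"
proof (induction s rule: ar.induct)
  case (1 x y w)
  have fin: "finite (Pk (x#y#w))"
    unfolding Pk_def by (rule finite_subset[of _ "{..<length (x#y#w)}"]) auto
  show ?case
    unfolding Pk_def
    apply (subst card_Suc_split)
    using fin apply (simp add: Pk_def)
    using 1 by (cases w) (auto simp: Pk_def)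
qed (auto simp: Pk_def)

lemma asc_runs_eq: "asc_runs s = card (Pk s)"
proof -
  let ?R = "{(i, j). i < j \<and> j < length s \<and>
       (\<forall>k. i \<le> k \<and> k < j \<longrightarrow> s ! k < s ! (k+1)) \<and>
       (i = 0 \<or> \<not> s ! (i - 1) < s ! i) \<and>
       (j + 1 = length s \<or> \<not> s ! j < s ! (j+1))}"
  let ?g = "\<lambda>(i::nat,j::nat). j - 1"
  have inj: "inj_on ?g ?R"
  proof (rule inj_onI)
    fix x y assume A0: "x \<in> ?R" "y \<in> ?R" "?g x = ?g y"
    obtain i j i' j' where xy: "x = (i,j)" "y = (i',j')" by fastforce
    have A: "(i,j) \<in> ?R" "(i',j') \<in> ?R" "?g (i,j) = ?g (i', j')" using A0 xy by auto
    then have jj: "j = j'" by auto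
    have H: "\<forall>k. i \<le> k \<and> k < j \<longrightarrow> s ! k < s ! (k+1)" "\<forall>k. i' \<le> k \<and> k < j' \<longrightarrow> s ! k < s ! (k+1)"
      "i < j" "i' < j'" using A by auto
    have "\<not> i < i'"
    proof
      assume lt: "i < i'"
      have "i \<le> i' - 1 \<and> i' - 1 < j" using lt H(3,4) jj by linarith
      then have "s ! (i' - 1) < s ! (i' - 1 + 1)" using H(1)[rule_format, of "i' - 1"] jj by simp
      moreover have "i' - 1 + 1 = i'" using lt by simp
      ultimately have "s ! (i' - 1) < s ! i'" by simp
      moreover have "i' = 0 \<or> \<not> s ! (i' - 1) < s ! i'" using A by auto
      ultimately show False using lt by auto
    qed
    moreover have "\<not> i' < i"
    proof
      assume lt: "i' < i"
      have "i' \<le> i - 1 \<and> i - 1 < j" using lt H(3,4) jj by linarith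
      then have "s ! (i - 1) < s ! (i - 1 + 1)" using H(2)[rule_format, of "i - 1"] jj by simp
      moreover have "i - 1 + 1 = i" using lt by simp
      ultimately have "s ! (i - 1) < s ! i" by simp
      moreover have "i = 0 \<or> \<not> s ! (i - 1) < s ! i" using A by auto
      ultimately show False using lt by auto
    qed
    ultimately show "x = y" using jj xy by auto
  qed
  have img: "?g ` ?R = Pk s"
  proof
    show "?g ` ?R \<subseteq> Pk s"
    proof
      fix x assume "x \<in> ?g ` ?R"
      then obtain i j where A: "(i,j) \<in> ?R" and x: "x = j - 1" by auto
      then have H: "\<forall>k. i \<le> k \<and> k < j \<longrightarrow> s!k < s!(k+1)" "i < j" by auto
      then have "i \<le> j - 1 \<and> j - 1 < j" by linarith
      then have "s ! (j - 1) < s ! (j - 1 + 1)" using H(1)[rule_format, of "j - 1"] by simp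
      then show "x \<in> Pk s" using A x by (auto simp: Pk_def)
    qed
  next
    show "Pk s \<subseteq> ?g ` ?R"
    proof
      fix p assume p: "p \<in> Pk s"
      define Q where "Q = (\<lambda>i. i \<le> p \<and> (\<forall>k. i \<le> k \<and> k < p + 1 \<longrightarrow> s ! k < s ! (k+1)))"
      have Qp: "Q p" using p by (auto simp: Q_def Pk_def le_less_Suc_eq)
      define i where "i = (LEAST i. Q i)"
      have Qi: "Q i" unfolding i_def by (rule LeastI[of Q, OF Qp])
      have mini: "\<not> Q (i - 1)" if "i > 0"
      proof
        assume "Q (i - 1)"
        then have "i \<le> i - 1" unfolding i_def by (rule Least_le)
        then show False using that by simp
      qed
      have "i = 0 \<or> \<not> s ! (i - 1) < s ! i"
      proof (rule ccontr)
        assume "\<not> (i = 0 \<or> \<not> s ! (i - 1) < s ! i)"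
        then have "i > 0" "s ! (i - 1) < s ! i" by auto
        then have lt: "i > 0" "s ! (i - 1) < s ! (i - 1 + 1)" by auto
        have ip: "i \<le> p" and H: "\<forall>k. i \<le> k \<and> k < p + 1 \<longrightarrow> s ! k < s ! (k+1)"
          using Qi unfolding Q_def by auto
        have "Q (i - 1)" unfolding Q_def
        proof (intro conjI allI impI)
          show "i - 1 \<le> p" using ip by simp
          fix k assume k: "i - 1 \<le> k \<and> k < p + 1"
          show "s ! k < s ! (k+1)"
          proof (cases "k = i - 1")
            case True then show ?thesis using lt by simp
          next
            case False then have "i \<le> k" using k by linarith
            then show ?thesis using H k by blast
          qed
        qed
        then show False using mini \<open>i > 0\<close> by simp
      qed
      moreover have "i < p + 1" "\<forall>k. i \<le> k \<and> k < p + 1 \<longrightarrow> s ! k < s ! (k+1)"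
        using Qi unfolding Q_def by auto
      moreover have "p + 1 < length s" "p + 1 + 1 = length s \<or> \<not> s ! (p+1) < s ! (p + 1 + 1)"
        using p unfolding Pk_def by auto
      ultimately have "(i, p + 1) \<in> ?R" by simp
      then show "p \<in> ?g ` ?R" by (rule image_eqI[rotated]) simp
    qed
  qed
  have "card ?R = card (Pk s)"
    using bij_betw_same_card[of ?g ?R "Pk s"] inj img by (simp add: bij_betw_def)
  then show ?thesis unfolding asc_runs_def by simp
qed

lemma dd_app:
  assumes "\<alpha> \<noteq> []" "last \<alpha> < m"
  shows "dd (x # \<alpha> @ m # \<gamma>) = dd (x # \<alpha>) + dd (m # \<gamma>)"
  using assms
proof (induction \<alpha> arbitrary: x rule: list_nonempty_induct)
  case (single u) then show ?case by simp
next
  case (cons u \<alpha>1)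
  then show ?case by (cases \<alpha>1) auto
qed

lemma dd_sent:
  assumes "s = [] \<or> (hd s < x \<and> hd s < y)"
  shows "dd (x # s) = dd (y # s)"
  using assms by (cases s) auto

lemma dd_shift: "dd (map (\<lambda>x. x + c) s) = dd s"
  by (induction s rule: dd.induct) (auto simp: hd_map)

lemma ar_app:
  assumes "\<alpha> \<noteq> []" "last \<alpha> < m"
  shows "ar (\<alpha> @ m # \<gamma>) + 1 = ar (\<alpha> @ [m]) + ar (m # \<gamma>) + (if \<gamma> = [] \<or> \<not> m < hd \<gamma> then 1 else 0)"
  using assms
proof (induction \<alpha> rule: list_nonempty_induct)
  case (single u) then show ?case by simp
next
  case (cons u \<alpha>1)
  then obtain v \<alpha>2 where a1: "\<alpha>1 = v # \<alpha>2" by (cases \<alpha>1) auto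
  have "hd (\<alpha>2 @ m # \<gamma>) = hd (\<alpha>2 @ [m])" by (cases \<alpha>2) auto
  then show ?case using cons a1 by simp
qed

lemma ar_drop_big: "s \<noteq> [] \<Longrightarrow> hd s < x \<Longrightarrow> ar (x # s) = ar s"
  by (cases s) auto

lemma ar_last_sent:
  "(s = [] \<or> (last s < x \<and> last s < y)) \<Longrightarrow> ar (s @ [x]) = ar (s @ [y])"
proof (induction s rule: ar.induct)
  case (1 u v w)
  then show ?case by (cases w) auto
qed auto

lemma ar_shift: "ar (map (\<lambda>x. x + c) s) = ar s"
  apply (induction s rule: ar.induct)
  subgoal for x y w by (cases w) auto
  by auto

lemma DD_comp:
  assumes "set \<alpha> \<subseteq> {1..a}" "length \<alpha> = a" "set \<beta> \<subseteq> {1..b}" "length \<beta> = b"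
  shows "dd ((a+b+2) # map (\<lambda>x. x + b) \<alpha> @ (a+b+1) # \<beta>) =
         dd ((a+1) # \<alpha>) + dd ((b+1) # \<beta>) + (if \<alpha> = [] \<and> \<beta> \<noteq> [] then 1 else 0)"
proof -
  have hb: "\<beta> \<noteq> [] \<Longrightarrow> hd \<beta> \<le> b" using assms(3) hd_in_set by fastforce
  have ha: "\<alpha> \<noteq> [] \<Longrightarrow> hd \<alpha> \<le> a" using assms(1) hd_in_set by fastforce
  have la: "\<alpha> \<noteq> [] \<Longrightarrow> last \<alpha> \<le> a" using assms(1) last_in_set by fastforce
  have sb: "dd ((a+b+1) # \<beta>) = dd ((b+1) # \<beta>)"
    by (rule dd_sent) (use hb in auto)
  show ?thesis
  proof (cases "\<alpha> = []")
    case True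
    then show ?thesis using sb hb by (cases \<beta>) auto
  next
    case False
    have "dd ((a+b+2) # map (\<lambda>x. x + b) \<alpha> @ (a+b+1) # \<beta>) =
          dd ((a+b+2) # map (\<lambda>x. x + b) \<alpha>) + dd ((a+b+1) # \<beta>)"
      by (rule dd_app) (use False la in \<open>auto simp: last_map\<close>)
    also have "dd ((a+b+2) # map (\<lambda>x. x + b) \<alpha>) = dd ((a+1+b) # map (\<lambda>x. x + b) \<alpha>)"
      by (rule dd_sent) (use False ha in \<open>auto simp: hd_map\<close>)
    also have "\<dots> = dd (map (\<lambda>x. x + b) ((a+1) # \<alpha>))" by simp
    also have "\<dots> = dd ((a+1) # \<alpha>)" by (rule dd_shift)
    finally show ?thesis using sb False by simp
  qed
qed

lemma AR_comp:
  assumes "set \<alpha> \<subseteq> {1..a}" "length \<alpha> = a" "set \<beta> \<subseteq> {1..b}" "length \<beta> = b"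
  shows "ar (map (\<lambda>x. x + b) \<alpha> @ (a+b+1) # \<beta> @ [a+b+2]) =
         ar (\<alpha> @ [a+1]) + ar (\<beta> @ [b+1]) + (if \<alpha> = [] \<and> \<beta> = [] then 1 else 0)"
proof -
  have hb: "\<beta> \<noteq> [] \<Longrightarrow> hd \<beta> \<le> b" using assms(3) hd_in_set by fastforce
  have lb: "\<beta> \<noteq> [] \<Longrightarrow> last \<beta> \<le> b" using assms(3) last_in_set by fastforce
  have la: "\<alpha> \<noteq> [] \<Longrightarrow> last \<alpha> \<le> a" using assms(1) last_in_set by fastforce
  have sb: "\<beta> \<noteq> [] \<Longrightarrow> ar ((a+b+1) # \<beta> @ [a+b+2]) = ar (\<beta> @ [b+1])"
  proof -
    assume ne: "\<beta> \<noteq> []"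
    have "ar ((a+b+1) # \<beta> @ [a+b+2]) = ar (\<beta> @ [a+b+2])"
      by (rule ar_drop_big) (use ne hb in auto)
    also have "\<dots> = ar (\<beta> @ [b+1])"
      by (rule ar_last_sent) (use ne lb in auto)
    finally show ?thesis .
  qed
  show ?thesis
  proof (cases "\<alpha> = []")
    case True
    then show ?thesis using sb assms(4) by (cases "\<beta> = []") auto
  next
    case False
    have A: "ar (map (\<lambda>x. x + b) \<alpha> @ (a+b+1) # (\<beta> @ [a+b+2])) + 1 =
          ar (map (\<lambda>x. x + b) \<alpha> @ [a+b+1]) + ar ((a+b+1) # \<beta> @ [a+b+2]) +
          (if \<beta> @ [a+b+2] = [] \<or> \<not> a+b+1 < hd (\<beta> @ [a+b+2]) then 1 else 0)"
      by (rule ar_app) (use False la in \<open>auto simp: last_map\<close>)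
    have B: "ar (map (\<lambda>x. x + b) \<alpha> @ [a+b+1]) = ar (\<alpha> @ [a+1])"
      using ar_shift[of b "\<alpha> @ [a+1]"] by (simp add: add.commute add.left_commute)
    show ?thesis
    proof (cases "\<beta> = []")
      case True
      then have "\<not> (\<beta> @ [a+b+2] = [] \<or> \<not> a+b+1 < hd (\<beta> @ [a+b+2]))" by simp
      then have "ar (map (\<lambda>x. x + b) \<alpha> @ (a+b+1) # (\<beta> @ [a+b+2])) + 1 =
          ar (map (\<lambda>x. x + b) \<alpha> @ [a+b+1]) + ar ((a+b+1) # \<beta> @ [a+b+2])"
        using A by simp
      then show ?thesis using B True False by simp
    next
      case nb: False
      then have "\<beta> @ [a+b+2] = [] \<or> \<not> a+b+1 < hd (\<beta> @ [a+b+2])" using hb by simp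
      then have "ar (map (\<lambda>x. x + b) \<alpha> @ (a+b+1) # (\<beta> @ [a+b+2])) + 1 =
          ar (map (\<lambda>x. x + b) \<alpha> @ [a+b+1]) + ar ((a+b+1) # \<beta> @ [a+b+2]) + 1"
        using A by simp
      then show ?thesis using B sb nb False by simp
    qed
  qed
qed

lemma edges_bl: "ts \<noteq> [] \<Longrightarrow> edges (Node ts) = edges (Node (butlast ts)) + edges (last ts) + 1"
  by (cases ts rule: rev_exhaust) auto

function psi :: "ptree \<Rightarrow> nat list" where
  "psi (Node ts) = (if ts = [] then [] else
     map (\<lambda>x. x + edges (Node (butlast ts))) (psi (last ts)) @ [edges (Node ts)] @ psi (Node (butlast ts)))"
  by pat_completeness auto
termination
proof (relation "measure edges")
  fix ts :: "ptree list" assume "ts \<noteq> []"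
  then show "(last ts, Node ts) \<in> measure edges" "(Node (butlast ts), Node ts) \<in> measure edges"
    using edges_bl[of ts] by (simp_all del: edges.simps)
qed auto

lemma tw_less: "m \<in> set p \<Longrightarrow> length (takeWhile (\<lambda>x. x \<noteq> m) p) < length p"
  by (induction p) auto

function phi :: "nat list \<Rightarrow> ptree" where
  "phi p = (if p = [] then Node [] else
     Node (children (phi (tl (dropWhile (\<lambda>x. x \<noteq> Max (set p)) p))) @
       [phi (map (\<lambda>x. x - length (tl (dropWhile (\<lambda>x. x \<noteq> Max (set p)) p)))
                (takeWhile (\<lambda>x. x \<noteq> Max (set p)) p))]))"
  by pat_completeness auto
termination
proof (relation "measure length")
  fix p :: "nat list" assume "p \<noteq> []"
  then have "length p > 0" by simp
  then show "(tl (dropWhile (\<lambda>x. x \<noteq> Max (set p)) p), p) \<in> measure length"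
    using length_dropWhile_le[of "\<lambda>x. x \<noteq> Max (set p)" p]
    by (cases p) auto
next
  fix p :: "nat list" assume "p \<noteq> []"
  then have "Max (set p) \<in> set p" by simp
  then show "(map (\<lambda>x. x - length (tl (dropWhile (\<lambda>x. x \<noteq> Max (set p)) p)))
                (takeWhile (\<lambda>x. x \<noteq> Max (set p)) p), p) \<in> measure length"
    using tw_less by auto
qed auto

declare psi.simps[simp del] phi.simps[simp del]

lemma young_snoc: "young_leaves (Node (ts @ [t])) = young_leaves (Node ts) + young_leaves t +
   (if ts \<noteq> [] \<and> children t = [] then 1 else 0)"
  by (cases ts) auto

lemma old_snoc: "old_leaves (Node (ts @ [t])) = old_leaves (Node ts) + old_leaves t +
   (if ts = [] \<and> children t = [] then 1 else 0)"
  by (cases ts) auto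

lemma children_edges: "children t = [] \<longleftrightarrow> edges t = 0"
  by (cases t) auto

lemma psi_snoc: "psi (Node (ts @ [t])) =
  map (\<lambda>x. x + edges (Node ts)) (psi t) @ (edges t + edges (Node ts) + 1) # psi (Node ts)"
  by (subst psi.simps) simp

lemma psi_Nil: "psi (Node []) = []"
  by (subst psi.simps) simp

lemma phi_Nil: "phi [] = Node []"
  by (subst phi.simps) simp

lemma ptree_snoc_induct:
  assumes "P (Node [])" "\<And>ts t. P (Node ts) \<Longrightarrow> P t \<Longrightarrow> P (Node (ts @ [t]))"
  shows "P T"
proof (induction T rule: measure_induct_rule[of edges])
  case (less T)
  obtain ts where T: "T = Node ts" by (cases T)
  show ?case
  proof (cases ts rule: rev_exhaust)
    case Nil then show ?thesis using assms(1) T by simp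
  next
    case (snoc ts' t)
    then have "edges (Node ts') < edges T" "edges t < edges T" using T by auto
    then show ?thesis using less assms(2) T snoc by simp
  qed
qed

lemma is_perm_comp:
  assumes "is_perm a \<alpha>" "is_perm b \<beta>"
  shows "is_perm (a+b+1) (map (\<lambda>x. x + b) \<alpha> @ (a+b+1) # \<beta>)"
proof -
  have sa: "set (map (\<lambda>x. x + b) \<alpha>) = {1+b..a+b}" using assms(1) by (simp add: is_perm_def)
  have sb: "set \<beta> = {1..b}" using assms(2) by (simp add: is_perm_def)
  have "distinct (map (\<lambda>x. x + b) \<alpha>)" using assms(1) by (simp add: is_perm_def distinct_map)
  moreover have "set (map (\<lambda>x. x + b) \<alpha> @ (a+b+1) # \<beta>) = {1..a+b+1}"
    using sa sb by auto
  moreover have "length (map (\<lambda>x. x + b) \<alpha> @ (a+b+1) # \<beta>) = a+b+1"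
    using assms by (simp add: is_perm_def)
  ultimately show ?thesis using assms(2) sa sb unfolding is_perm_def by auto
qed

lemma avoids_shift: "avoids132 (map (\<lambda>x. x + c) xs) = avoids132 xs"
proof -
  have "\<forall>a b d. a < b \<and> b < d \<and> d < length xs \<longrightarrow>
     (map (\<lambda>x. x + c) xs ! a < map (\<lambda>x. x + c) xs ! d \<and> map (\<lambda>x. x + c) xs ! d < map (\<lambda>x. x + c) xs ! b
      \<longleftrightarrow> xs ! a < xs ! d \<and> xs ! d < xs ! b)" by auto
  then show ?thesis unfolding avoids132_def length_map by blast
qed

lemma avoids_appL:
  assumes "avoids132 (xs @ ys)" shows "avoids132 xs"
  unfolding avoids132_def
proof clarify
  fix a b c assume h: "a < b" "b < c" "c < length xs" "xs ! a < xs ! c" "xs ! c < xs ! b"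
  have "\<exists>a b c. a < b \<and> b < c \<and> c < length (xs @ ys) \<and>
     (xs @ ys) ! a < (xs @ ys) ! c \<and> (xs @ ys) ! c < (xs @ ys) ! b"
    using h by (intro exI[of _ a] exI[of _ b] exI[of _ c]) (simp add: nth_append)
  then show False using assms unfolding avoids132_def by blast
qed

lemma avoids_appR:
  assumes "avoids132 (xs @ ys)" shows "avoids132 ys"
  unfolding avoids132_def
proof clarify
  fix a b c assume h: "a < b" "b < c" "c < length ys" "ys ! a < ys ! c" "ys ! c < ys ! b"
  have "\<exists>a b c. a < b \<and> b < c \<and> c < length (xs @ ys) \<and>
     (xs @ ys) ! a < (xs @ ys) ! c \<and> (xs @ ys) ! c < (xs @ ys) ! b"
    using h by (intro exI[of _ "length xs + a"] exI[of _ "length xs + b"] exI[of _ "length xs + c"])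
       (simp add: nth_append)
  then show False using assms unfolding avoids132_def by blast
qed

lemma avoids_comp:
  assumes A: "avoids132 A" and B: "avoids132 B" and Am: "\<forall>x\<in>set A. x < m" and Bm: "\<forall>y\<in>set B. y < m"
    and AB: "\<forall>x\<in>set A. \<forall>y\<in>set B. y < x"
  shows "avoids132 (A @ m # B)"
  unfolding avoids132_def
proof clarify
  fix i j k assume h: "i < j" "j < k" "k < length (A @ m # B)"
    "(A @ m # B) ! i < (A @ m # B) ! k" "(A @ m # B) ! k < (A @ m # B) ! j"
  let ?L = "length A"
  have nth: "(A @ m # B) ! p = (if p < ?L then A ! p else if p = ?L then m else B ! (p - ?L - 1))" for p
  proof (cases "p < ?L")
    case True then show ?thesis by (simp add: nth_append)
  next
    case False
    show ?thesis
    proof (cases "p = ?L")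
      case True then show ?thesis by simp
    next
      case F2: False
      then have "p - ?L = Suc (p - ?L - 1)" using False by simp
      then show ?thesis using False F2 by (simp add: nth_append)
    qed
  qed
  show False
  proof (cases "k < ?L")
    case True
    then have "i < ?L" "j < ?L" using h by auto
    then have "A ! i < A ! k" "A ! k < A ! j" using h(4,5) nth[of i] nth[of j] nth[of k] True by auto
    then show False using A h(1,2) True unfolding avoids132_def by blast
  next
    case kL: False
    show False
    proof (cases "k = ?L")
      case True
      then have "j < ?L" using h by simp
      then have "A ! j < m" using Am by simp
      then show False using h True nth[of j] nth[of k] \<open>j < ?L\<close> by simp
    next
      case False
      then have kB: "k > ?L" "k - ?L - 1 < length B" using kL h by auto
      then have ykB: "B ! (k - ?L - 1) \<in> set B" by simp
      show False
      proof (cases "i < ?L")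
        case True
        then have "A ! i \<in> set A" by simp
        then have "B ! (k - ?L - 1) < A ! i" using AB ykB by blast
        then show False using h(4) nth[of i] nth[of k] True kB by simp
      next
        case iL: False
        show False
        proof (cases "i = ?L")
          case True
          have "B ! (k - ?L - 1) < m" using Bm ykB by blast
          then show False using h(4) nth[of i] nth[of k] kB True by simp
        next
          case False
          then have "i > ?L" using iL by simp
          then have "j > ?L" using h by simp
          have "i - ?L - 1 < j - ?L - 1" "j - ?L - 1 < k - ?L - 1" using \<open>i > ?L\<close> h by auto
          moreover have "B ! (i - ?L - 1) < B ! (k - ?L - 1)" "B ! (k - ?L - 1) < B ! (j - ?L - 1)"
            using h(4,5) nth[of i] nth[of j] nth[of k] \<open>i > ?L\<close> \<open>j > ?L\<close> kB by auto
          ultimately show False using B kB unfolding avoids132_def by blast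
        qed
      qed
    qed
  qed
qed

lemma perm_bounds: "is_perm a \<alpha> \<Longrightarrow> set \<alpha> \<subseteq> {1..a} \<and> length \<alpha> = a"
  by (simp add: is_perm_def)

lemma psi_S132: "psi T \<in> S132 (edges T)"
proof (induction T rule: ptree_snoc_induct)
  case 1 then show ?case by (simp add: psi_Nil S132_def is_perm_def avoids132_def)
next
  case (2 ts t)
  let ?a = "edges t" and ?b = "edges (Node ts)"
  have pa: "is_perm ?a (psi t)" "avoids132 (psi t)" and pb: "is_perm ?b (psi (Node ts))" "avoids132 (psi (Node ts))"
    using 2 by (auto simp: S132_def)
  have "is_perm (?a + ?b + 1) (psi (Node (ts @ [t])))"
    unfolding psi_snoc by (rule is_perm_comp[OF pa(1) pb(1)])
  moreover have "avoids132 (psi (Node (ts @ [t])))"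
    unfolding psi_snoc
  proof (rule avoids_comp)
    show "avoids132 (map (\<lambda>x. x + ?b) (psi t))" using pa(2) avoids_shift by simp
    show "avoids132 (psi (Node ts))" by (rule pb(2))
    show "\<forall>x\<in>set (map (\<lambda>x. x + ?b) (psi t)). x < ?a + ?b + 1"
      using pa(1) by (auto simp: is_perm_def)
    show "\<forall>y\<in>set (psi (Node ts)). y < ?a + ?b + 1"
      using pb(1) by (auto simp: is_perm_def)
    show "\<forall>x\<in>set (map (\<lambda>x. x + ?b) (psi t)). \<forall>y\<in>set (psi (Node ts)). y < x"
      using pa(1) pb(1) by (auto simp: is_perm_def)
  qed
  moreover have "edges (Node (ts @ [t])) = ?a + ?b + 1" by simp
  ultimately show ?case unfolding S132_def by (simp del: edges.simps)
qed

lemma edges_snoc: "edges (Node (ts @ [t])) = edges (Node ts) + edges t + 1"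
  by simp

lemma phi_comp:
  assumes "is_perm a \<alpha>" "is_perm b \<beta>"
  shows "phi (map (\<lambda>x. x + b) \<alpha> @ (a+b+1) # \<beta>) = Node (children (phi \<beta>) @ [phi \<alpha>])"
proof -
  let ?p = "map (\<lambda>x. x + b) \<alpha> @ (a+b+1) # \<beta>"
  have sa: "set \<alpha> = {1..a}" "length \<alpha> = a" and sb: "set \<beta> = {1..b}" "length \<beta> = b"
    using assms by (auto simp: is_perm_def)
  have M: "Max (set ?p) = a+b+1"
    by (rule Max_eqI) (use sa sb in auto)
  have nA: "\<forall>x\<in>set (map (\<lambda>x. x + b) \<alpha>). x \<noteq> a+b+1" using sa by auto
  have tw: "takeWhile (\<lambda>x. x \<noteq> a+b+1) ?p = map (\<lambda>x. x + b) \<alpha>"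
    by (subst takeWhile_append2) (use nA in auto)
  have dw: "dropWhile (\<lambda>x. x \<noteq> a+b+1) ?p = (a+b+1) # \<beta>"
    by (subst dropWhile_append2) (use nA in auto)
  have mm: "map (\<lambda>x. x - b) (map (\<lambda>x. x + b) \<alpha>) = \<alpha>" by (simp add: map_idI)
  show ?thesis
    apply (subst phi.simps)
    apply (simp only: M)
    apply (simp only: tw dw)
    by (simp add: sb(2) comp_def)
qed

lemma decomp:
  assumes "\<pi> \<in> S132 n" "n > 0"
  shows "\<exists>\<alpha> \<beta>. \<pi> = map (\<lambda>x. x + length \<beta>) \<alpha> @ n # \<beta> \<and> \<alpha> \<in> S132 (length \<alpha>) \<and>
           \<beta> \<in> S132 (length \<beta>) \<and> length \<alpha> + length \<beta> + 1 = n"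
proof -
  have P: "length \<pi> = n" "distinct \<pi>" "set \<pi> = {1..n}" "avoids132 \<pi>"
    using assms(1) by (auto simp: S132_def is_perm_def)
  then have "n \<in> set \<pi>" using assms(2) by simp
  then obtain A B where pi: "\<pi> = A @ n # B" using split_list by metis
  have nA: "n \<notin> set A" and nB: "n \<notin> set B" and dAB: "set A \<inter> set B = {}"
    and dA: "distinct A" and dB: "distinct B" using P(2) pi by auto
  have av: "avoids132 (A @ n # B)" using P(4) pi by simp
  have "set \<pi> = insert n (set A \<union> set B)" using pi by auto
  then have "set A \<union> set B = set \<pi> - {n}" using nA nB by auto
  also have "\<dots> = {1..<n}" using P(3) by auto
  finally have sAB: "set A \<union> set B = {1..<n}" .
  have len: "length A + length B + 1 = n" using P(1) pi by simp
  have C1: "\<forall>x\<in>set A. \<forall>y\<in>set B. y < x"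
  proof (intro ballI)
    fix x y assume x: "x \<in> set A" and y: "y \<in> set B"
    show "y < x"
    proof (rule ccontr)
      assume "\<not> y < x"
      moreover have "x \<noteq> y" using x y dAB by auto
      ultimately have xy: "x < y" by simp
      have yn: "y < n" using y sAB by auto
      obtain i where i: "i < length A" "A ! i = x" using x by (auto simp: in_set_conv_nth)
      obtain j where j: "j < length B" "B ! j = y" using y by (auto simp: in_set_conv_nth)
      have "(A @ n # B) ! i = x" using i by (simp add: nth_append)
      moreover have "(A @ n # B) ! (length A) = n" by simp
      moreover have "(A @ n # B) ! (length A + 1 + j) = y" using j by (simp add: nth_append)
      ultimately have "\<exists>a b c. a < b \<and> b < c \<and> c < length (A @ n # B) \<and>
         (A @ n # B) ! a < (A @ n # B) ! c \<and> (A @ n # B) ! c < (A @ n # B) ! b"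
        using i j xy yn
        by (intro exI[of _ i] exI[of _ "length A"] exI[of _ "length A + 1 + j"]) simp
      then show False using av unfolding avoids132_def by blast
    qed
  qed
  define b where "b = length B"
  define a where "a = length A"
  have Bb: "\<forall>y\<in>set B. y \<le> b"
  proof
    fix y assume y: "y \<in> set B"
    show "y \<le> b"
    proof (rule ccontr)
      assume "\<not> y \<le> b"
      have "{1..y} \<subseteq> set B"
      proof
        fix z assume z: "z \<in> {1..y}"
        have "y < n" using y sAB by auto
        then have "z \<in> set A \<union> set B" using z sAB by auto
        moreover have "z \<notin> set A" using C1 y z by fastforce
        ultimately show "z \<in> set B" by blast
      qed
      then have "card {1..y} \<le> card (set B)" using card_mono[of "set B" "{1..y}"] by simp
      then have "y \<le> b" using dB by (simp add: b_def distinct_card)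
      then show False using \<open>\<not> y \<le> b\<close> by simp
    qed
  qed
  have sB: "set B = {1..b}"
  proof (rule card_subset_eq)
    show "finite {1..b}" by simp
    show "set B \<subseteq> {1..b}" using Bb sAB by fastforce
    show "card (set B) = card {1..b}" using dB by (simp add: b_def distinct_card)
  qed
  have sA: "set A = {1+b..a+b}"
  proof
    show "set A \<subseteq> {1+b..a+b}"
    proof
      fix x assume x: "x \<in> set A"
      then have "x \<in> {1..<n}" "x \<notin> {1..b}" using sAB sB dAB by blast+
      then show "x \<in> {1+b..a+b}" using len unfolding a_def b_def by auto
    qed
    show "{1+b..a+b} \<subseteq> set A"
    proof
      fix x assume x: "x \<in> {1+b..a+b}"
      then have "x \<in> {1..<n}" "x \<notin> set B" using len sB unfolding a_def b_def by auto
      then show "x \<in> set A" using sAB by blast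
    qed
  qed
  define \<alpha> where "\<alpha> = map (\<lambda>x. x - b) A"
  have Aal: "A = map (\<lambda>x. x + b) \<alpha>"
    unfolding \<alpha>_def by (rule sym, simp, rule map_idI) (use sA in auto)
  have "set \<alpha> = (\<lambda>x. x - b) ` {1+b..a+b}" unfolding \<alpha>_def using sA by simp
  also have "\<dots> = (\<lambda>x. x - b) ` ((\<lambda>x. x + b) ` {1..a})" by simp
  also have "\<dots> = {1..a}" by (simp only: image_image) simp
  finally have sal: "set \<alpha> = {1..a}" .
  have dal: "distinct \<alpha>" using dA Aal by (simp add: distinct_map)
  have avA: "avoids132 A" using avoids_appL[of A "n # B"] av by simp
  have avB: "avoids132 B" using avoids_appR[of "A @ [n]" B] av by simp
  have "\<alpha> \<in> S132 (length \<alpha>)"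
    using sal dal avA Aal avoids_shift[of b \<alpha>] unfolding S132_def is_perm_def \<alpha>_def a_def by simp
  moreover have "B \<in> S132 (length B)"
    using sB dB avB unfolding S132_def is_perm_def b_def by simp
  moreover have "\<pi> = map (\<lambda>x. x + length B) \<alpha> @ n # B" using pi Aal b_def by simp
  moreover have "length \<alpha> + length B + 1 = n" using len \<alpha>_def by simp
  ultimately show ?thesis by blast
qed

lemma phi_psi: "phi (psi T) = T"
proof (induction T rule: ptree_snoc_induct)
  case 1 then show ?case by (simp add: psi_Nil phi_Nil)
next
  case (2 ts t)
  have pa: "is_perm (edges t) (psi t)" and pb: "is_perm (edges (Node ts)) (psi (Node ts))"
    using psi_S132[of t] psi_S132[of "Node ts"] unfolding S132_def by (simp_all del: edges.simps)
  show ?case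
    unfolding psi_snoc phi_comp[OF pa pb] using 2 by simp
qed

lemma psi_phi: "\<pi> \<in> S132 n \<Longrightarrow> edges (phi \<pi>) = n \<and> psi (phi \<pi>) = \<pi>"
proof (induction n arbitrary: \<pi> rule: less_induct)
  case (less n)
  show ?case
  proof (cases "n = 0")
    case True
    then have "\<pi> = []" using less.prems by (simp add: S132_def is_perm_def)
    then show ?thesis using True by (simp add: phi_Nil psi_Nil)
  next
    case False
    then obtain \<alpha> \<beta> where d: "\<pi> = map (\<lambda>x. x + length \<beta>) \<alpha> @ n # \<beta>" "\<alpha> \<in> S132 (length \<alpha>)"
           "\<beta> \<in> S132 (length \<beta>)" "length \<alpha> + length \<beta> + 1 = n"
      using decomp[OF less.prems] by blast
    let ?a = "length \<alpha>" and ?b = "length \<beta>"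
    have "?a < n" "?b < n" using d(4) by auto
    then have IHa: "edges (phi \<alpha>) = ?a \<and> psi (phi \<alpha>) = \<alpha>"
      and IHb: "edges (phi \<beta>) = ?b \<and> psi (phi \<beta>) = \<beta>"
      using less.IH[of ?a \<alpha>] less.IH[of ?b \<beta>] d by auto
    have pa: "is_perm ?a \<alpha>" and pb: "is_perm ?b \<beta>" using d by (auto simp: S132_def)
    have pi: "\<pi> = map (\<lambda>x. x + ?b) \<alpha> @ (?a + ?b + 1) # \<beta>" using d by simp
    have ph: "phi \<pi> = Node (children (phi \<beta>) @ [phi \<alpha>])" unfolding pi by (rule phi_comp[OF pa pb])
    have nb: "Node (children (phi \<beta>)) = phi \<beta>" by (cases "phi \<beta>") simp
    have e: "edges (phi \<pi>) = n"
      unfolding ph edges_snoc nb using IHa IHb d(4) by simp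
    have "psi (phi \<pi>) = \<pi>"
      unfolding ph psi_snoc nb using IHa IHb pi by simp
    then show ?thesis using e by simp
  qed
qed

lemma stats: "young_leaves T = dd ((edges T + 1) # psi T) \<and> old_leaves T = ar (psi T @ [edges T + 1])"
proof (induction T rule: ptree_snoc_induct)
  case 1 then show ?case by (simp add: psi_Nil)
next
  case (2 ts t)
  let ?a = "edges t" and ?b = "edges (Node ts)"
  have pa: "is_perm ?a (psi t)" and pb: "is_perm ?b (psi (Node ts))"
    using psi_S132[of t] psi_S132[of "Node ts"] unfolding S132_def by (simp_all del: edges.simps)
  have ba: "set (psi t) \<subseteq> {1..?a}" "length (psi t) = ?a" using pa by (auto simp: is_perm_def)
  have bb: "set (psi (Node ts)) \<subseteq> {1..?b}" "length (psi (Node ts)) = ?b" using pb by (auto simp: is_perm_def)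
  have e: "edges (Node (ts @ [t])) = ?a + ?b + 1" by (simp only: edges_snoc)
  have c1: "psi t = [] \<longleftrightarrow> children t = []" using ba(2) children_edges[of t] by auto
  have c2: "psi (Node ts) = [] \<longleftrightarrow> ts = []" using bb(2) by (cases ts) auto
  have Y: "young_leaves (Node (ts @ [t])) = dd ((edges (Node (ts @ [t])) + 1) # psi (Node (ts @ [t])))"
  proof -
    have "dd ((edges (Node (ts @ [t])) + 1) # psi (Node (ts @ [t]))) =
          dd ((?a + ?b + 2) # map (\<lambda>x. x + ?b) (psi t) @ (?a + ?b + 1) # psi (Node ts))"
      unfolding e psi_snoc by simp
    also have "\<dots> = dd ((?a+1) # psi t) + dd ((?b+1) # psi (Node ts)) +
         (if psi t = [] \<and> psi (Node ts) \<noteq> [] then 1 else 0)"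
      by (rule DD_comp[OF ba bb])
    finally show ?thesis using 2 young_snoc[of ts t] c1 c2 by simp
  qed
  have O: "old_leaves (Node (ts @ [t])) = ar (psi (Node (ts @ [t])) @ [edges (Node (ts @ [t])) + 1])"
  proof -
    have "ar (psi (Node (ts @ [t])) @ [edges (Node (ts @ [t])) + 1]) =
          ar (map (\<lambda>x. x + ?b) (psi t) @ (?a + ?b + 1) # psi (Node ts) @ [?a + ?b + 2])"
      unfolding e psi_snoc by simp
    also have "\<dots> = ar (psi t @ [?a+1]) + ar (psi (Node ts) @ [?b+1]) +
         (if psi t = [] \<and> psi (Node ts) = [] then 1 else 0)"
      by (rule AR_comp[OF ba bb])
    finally show ?thesis using 2 old_snoc[of ts t] c1 c2 by simp
  qed
  show ?case using Y O by blast
qed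

theorem mainTheorem11:
  fixes n :: nat
  assumes "n \<ge> 1"
  shows "\<exists>\<psi>. bij_betw \<psi> {T. edges T = n} (S132 n) \<and>
    (\<forall>T. edges T = n \<longrightarrow>
       young_leaves T = double_descents ((n+1) # \<psi> T) \<and>
       old_leaves T = asc_runs (\<psi> T @ [n+1]))"
proof (intro exI conjI)
  show "bij_betw psi {T. edges T = n} (S132 n)"
  proof (rule bij_betw_byWitness[where f'=phi])
    show "\<forall>T\<in>{T. edges T = n}. phi (psi T) = T" by (simp add: phi_psi)
    show "\<forall>p\<in>S132 n. psi (phi p) = p" using psi_phi by blast
    show "psi ` {T. edges T = n} \<subseteq> S132 n" using psi_S132 by auto
    show "phi ` S132 n \<subseteq> {T. edges T = n}" using psi_phi by auto
  qed
  show "\<forall>T. edges T = n \<longrightarrow>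
       young_leaves T = double_descents ((n+1) # psi T) \<and>
       old_leaves T = asc_runs (psi T @ [n+1])"
    using stats by (simp add: dd_eq asc_runs_eq ar_eq)
qed

end
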